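(* The function \[ F_0(k,a,b,c) = (-1)^k\,\frac{\Gamma(2a+k)\Gamma(2b+k)}{\Gamma(2a+2c+k)\Gamma(2b+2c+k)}\cdot\frac{\Gamma(2c)\,\Gamma(a-b+c+\tfrac12)}{\Gamma(a-b-c+\tfrac12)} \] is a WZ seed in the variables $a,b,c$.
   Context: A term $F(n_1,\dots,n_r)$ is hypergeometric in $n_1,\dots,n_r$ if each ratio $F(\dots,n_i+1,\dots)/F(\dots,n_i,\dots)$ is a rational function of $n_1,\dots,n_r$. Write $\Delta_n f(n)=f(n+1)-f(n)$. Two hypergeometric terms $F(n,k),G(n,k)$ form a WZ pair, and $G$ is called a WZ mate of $F$, if $\Delta_n F(n,k)=\Delta_k G(n,k)$. A hypergeometric term $F_0(k,a,b,\dots)$ (hypergeometric in $k,a,b,\dots$) is a WZ seed in the variables $a,b,\dots$ if for all integers $K,A,B,\dots$ and all complex $k_0$ and all values of the parameters $a,b,\dots$, the term $F(n,k)=F_0(Kn+k_0+k,\,An+a,\,Bn+b,\dots)$ has a WZ mate $G(n,k)$ (a hypergeometric term). Factors such as $(-1)^x$ or $z^x$ with non-integer exponent $x$ are understood as hypergeometric factors satisfying $(-1)^{x+1}=-(-1)^x$, $z^{x+1}=z\cdot z^x$ (e.g. defined via a fixed branch of the exponential). *)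

theory Defs
  imports "HOL-Analysis.Analysis" "HOL-Computational_Algebra.Polynomial"
begin

text \<open>Bivariate polynomials with complex coefficients, represented as polynomials
  (in the second variable) whose coefficients are polynomials (in the first variable).\<close>
definition poly2 :: "complex poly poly \<Rightarrow> complex \<Rightarrow> complex \<Rightarrow> complex" where
  "poly2 P x y = poly (map_poly (\<lambda>c. poly c x) P) y"

text \<open>The hypergeometric factor (-1)^x for complex x, via the fixed branch exp(i pi x);
  it satisfies (-1)^(x+1) = -(-1)^x.\<close>
definition neg1_pow :: "complex \<Rightarrow> complex" where
  "neg1_pow x = exp (complex_of_real pi * \<i> * x)"

definition hypergeometric2 :: "(int \<Rightarrow> int \<Rightarrow> complex) \<Rightarrow> bool" where
  "hypergeometric2 G \<longleftrightarrow>
     (\<exists>P1 Q1 P2 Q2 :: complex poly poly. Q1 \<noteq> 0 \<and> Q2 \<noteq> 0 \<and>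
        (\<forall>n k. poly2 Q1 (of_int n) (of_int k) * G (n + 1) k
               = poly2 P1 (of_int n) (of_int k) * G n k) \<and>
        (\<forall>n k. poly2 Q2 (of_int n) (of_int k) * G n (k + 1)
               = poly2 P2 (of_int n) (of_int k) * G n k))"

definition WZ_mate :: "(int \<Rightarrow> int \<Rightarrow> complex) \<Rightarrow> (int \<Rightarrow> int \<Rightarrow> complex) \<Rightarrow> bool" where
  "WZ_mate F G \<longleftrightarrow> hypergeometric2 G \<and> (\<forall>n k. F (n + 1) k - F n k = G n (k + 1) - G n k)"

definition F0 :: "complex \<Rightarrow> complex \<Rightarrow> complex \<Rightarrow> complex \<Rightarrow> complex" where
  "F0 k a b c = neg1_pow k *
     (Gamma (2*a + k) * Gamma (2*b + k) / (Gamma (2*a + 2*c + k) * Gamma (2*b + 2*c + k))) *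
     (Gamma (2*c) * Gamma (a - b + c + 1/2) / Gamma (a - b - c + 1/2))"

definition F_spec :: "int \<Rightarrow> int \<Rightarrow> int \<Rightarrow> int \<Rightarrow> complex \<Rightarrow> complex \<Rightarrow> complex \<Rightarrow> complex
    \<Rightarrow> int \<Rightarrow> int \<Rightarrow> complex" where
  "F_spec K A B C k0 a b c n k =
     F0 (of_int (K*n) + k0 + of_int k) (of_int (A*n) + a) (of_int (B*n) + b) (of_int (C*n) + c)"

definition F_regular :: "int \<Rightarrow> int \<Rightarrow> int \<Rightarrow> int \<Rightarrow> complex \<Rightarrow> complex \<Rightarrow> complex \<Rightarrow> complex \<Rightarrow> bool" where
  "F_regular K A B C k0 a b c \<longleftrightarrow>
     (\<forall>n k :: int.
        let x = of_int (K*n) + k0 + of_int k; a' = of_int (A*n) + a;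
            b' = of_int (B*n) + b; c' = of_int (C*n) + c
        in 2*a' + x \<notin> \<int>\<^sub>\<le>\<^sub>0 \<and> 2*b' + x \<notin> \<int>\<^sub>\<le>\<^sub>0 \<and>
           2*a' + 2*c' + x \<notin> \<int>\<^sub>\<le>\<^sub>0 \<and> 2*b' + 2*c' + x \<notin> \<int>\<^sub>\<le>\<^sub>0 \<and>
           2*c' \<notin> \<int>\<^sub>\<le>\<^sub>0 \<and> a' - b' + c' + 1/2 \<notin> \<int>\<^sub>\<le>\<^sub>0 \<and> a' - b' - c' + 1/2 \<notin> \<int>\<^sub>\<le>\<^sub>0)"

end

theory Submission
  imports Defs
begin


lemma F0_prod: "F0 k a b c = neg1_pow k * Gamma(2*a+k) * Gamma(2*b+k) * rGamma(2*a+2*c+k) *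
   rGamma(2*b+2*c+k) * Gamma(2*c) * Gamma(a-b+c+1/2) * rGamma(a-b-c+1/2)"
  unfolding F0_def rGamma_inverse_Gamma divide_inverse inverse_mult_distrib
  by (simp only: mult.assoc mult.commute mult.left_commute)

lemma neg1_pow_plus1: "neg1_pow (x + 1) = - neg1_pow x"
  unfolding neg1_pow_def by (simp add: distrib_left exp_add exp_pi_i)

lemma neg1_pow_shift: "neg1_pow (x + y) = exp (complex_of_real pi * \<i> * y) * neg1_pow x"
  unfolding neg1_pow_def by (simp add: distrib_left exp_add)



lemma rG1: "w = z + 1 \<Longrightarrow> rGamma z = z * rGamma w"
  using rGamma_plus1[of z] by simp
lemma rG2: "w = z + 2 \<Longrightarrow> rGamma (z::complex) = z * (z+1) * rGamma w"
  using rGamma_plus1[of z] rGamma_plus1[of "z+1"] by (simp add: add.assoc mult.assoc)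
lemma G1: "z \<notin> \<int>\<^sub>\<le>\<^sub>0 \<Longrightarrow> w = z + 1 \<Longrightarrow> Gamma w = z * Gamma z"
  using Gamma_plus1[of z] by simp
lemma G2: fixes z :: complex assumes "z \<notin> \<int>\<^sub>\<le>\<^sub>0" "w = z + 2" shows "Gamma w = z * (z+1) * Gamma z"
proof -
  have "z + 1 \<notin> \<int>\<^sub>\<le>\<^sub>0"
  proof
    assume "z + 1 \<in> \<int>\<^sub>\<le>\<^sub>0"
    then obtain n where "z + 1 = - of_nat n" by (auto elim!: nonpos_Ints_cases')
    then have "z = - of_nat (Suc n)" by (simp add: algebra_simps) (metis add.commute add_diff_cancel_left' diff_minus_eq_add minus_diff_eq)
    then show False using assms(1) minus_of_nat_in_nonpos_Ints by metis
  qed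
  then show ?thesis using Gamma_plus1[of z] Gamma_plus1[of "z+1"] assms by (simp add: add.assoc)
qed

definition Ha :: "complex \<Rightarrow> complex \<Rightarrow> complex \<Rightarrow> complex \<Rightarrow> complex" where
  "Ha x a b c = neg1_pow x * Gamma(2*a+x) * Gamma(2*b+x) * rGamma(2*a+2*c+x+1) *
   rGamma(2*b+2*c+x) * Gamma(2*c) * Gamma(a-b+c+1/2) * rGamma(a-b-c+3/2) * (c*(1-2*b-2*c-x))"

lemma step_a:
  assumes "2*a+x \<notin> \<int>\<^sub>\<le>\<^sub>0" "2*b+x \<notin> \<int>\<^sub>\<le>\<^sub>0" "a-b+c+1/2 \<notin> \<int>\<^sub>\<le>\<^sub>0"
  shows "F0 x (a+1) b c - F0 x a b c = Ha (x+1) a b c - Ha x a b c"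
proof -
  have e1: "Gamma (2*(a+1)+x) = (2*a+x)*(2*a+x+1)*Gamma(2*a+x)" by (rule G2) (use assms in auto)
  have e2: "Gamma (2*a+(x+1)) = (2*a+x)*Gamma(2*a+x)" by (rule G1) (use assms in auto)
  have e3: "Gamma (2*b+(x+1)) = (2*b+x)*Gamma(2*b+x)" by (rule G1) (use assms in auto)
  have e4: "rGamma (2*a+2*c+x) = (2*a+2*c+x)*(2*a+2*c+x+1)*rGamma(2*(a+1)+2*c+x)" by (rule rG2) auto
  have e5: "rGamma (2*a+2*c+x+1) = (2*a+2*c+x+1)*rGamma(2*(a+1)+2*c+x)" by (rule rG1) auto
  have e6: "rGamma (2*a+2*c+(x+1)+1) = rGamma(2*(a+1)+2*c+x)" by (rule arg_cong[where f=rGamma]) auto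
  have e7: "rGamma (2*b+2*c+x) = (2*b+2*c+x)*rGamma(2*b+2*c+(x+1))" by (rule rG1) auto
  have e8: "Gamma ((a+1)-b+c+1/2) = (a-b+c+1/2)*Gamma(a-b+c+1/2)" by (rule G1) (use assms in auto)
  have e9: "rGamma (a-b-c+1/2) = (a-b-c+1/2)*rGamma(a-b-c+3/2)" by (rule rG1) auto
  have e10: "rGamma ((a+1)-b-c+1/2) = rGamma(a-b-c+3/2)" by (rule arg_cong[where f=rGamma]) auto
  show ?thesis
    unfolding F0_prod Ha_def neg1_pow_plus1 e1 e2 e3 e4 e5 e6 e7 e8 e9 e10
    by (simp add: algebra_simps)
qed



definition Hb :: "complex \<Rightarrow> complex \<Rightarrow> complex \<Rightarrow> complex \<Rightarrow> complex" where
  "Hb x a b c = neg1_pow x * Gamma(2*a+x) * Gamma(2*b+x) * rGamma(2*a+2*c+x) *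
   rGamma(2*b+2*c+x+1) * Gamma(2*c) * Gamma(a-b+c-1/2) * rGamma(a-b-c+1/2) * (c*(2*a+2*c+x-1))"

definition Hc :: "complex \<Rightarrow> complex \<Rightarrow> complex \<Rightarrow> complex \<Rightarrow> complex" where
  "Hc x a b c = neg1_pow x * Gamma(2*a+x) * Gamma(2*b+x) * rGamma(2*a+2*c+x+1) *
   rGamma(2*b+2*c+x+1) * Gamma(2*c) * Gamma(a-b+c+1/2) * rGamma(a-b-c+1/2) *
   ((x^2 + (2*a+2*b+6*c)*x + c + 10*c^2 + 6*b*c + 6*a*c + 4*a*b)/2)"

lemma step_b:
  assumes "2*a+x \<notin> \<int>\<^sub>\<le>\<^sub>0" "2*b+x \<notin> \<int>\<^sub>\<le>\<^sub>0" "a-b+c-1/2 \<notin> \<int>\<^sub>\<le>\<^sub>0"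
  shows "F0 x a (b+1) c - F0 x a b c = Hb (x+1) a b c - Hb x a b c"
proof -
  have e1: "Gamma (2*(b+1)+x) = (2*b+x)*(2*b+x+1)*Gamma(2*b+x)" by (rule G2) (use assms in auto)
  have e2: "Gamma (2*a+(x+1)) = (2*a+x)*Gamma(2*a+x)" by (rule G1) (use assms in auto)
  have e3: "Gamma (2*b+(x+1)) = (2*b+x)*Gamma(2*b+x)" by (rule G1) (use assms in auto)
  have e4: "rGamma (2*a+2*c+x) = (2*a+2*c+x)*rGamma(2*a+2*c+x+1)" by (rule rG1) auto
  have e5: "rGamma (2*a+2*c+(x+1)) = rGamma(2*a+2*c+x+1)" by (rule arg_cong[where f=rGamma]) auto
  have e6: "rGamma (2*b+2*c+x) = (2*b+2*c+x)*(2*b+2*c+x+1)*rGamma(2*(b+1)+2*c+x)" by (rule rG2) auto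
  have e7: "rGamma (2*b+2*c+x+1) = (2*b+2*c+x+1)*rGamma(2*(b+1)+2*c+x)" by (rule rG1) auto
  have e8: "rGamma (2*b+2*c+(x+1)+1) = rGamma(2*(b+1)+2*c+x)" by (rule arg_cong[where f=rGamma]) auto
  have e9: "Gamma (a-b+c+1/2) = (a-b+c-1/2)*Gamma(a-b+c-1/2)" by (rule G1) (use assms in auto)
  have e10: "Gamma (a-(b+1)+c+1/2) = Gamma(a-b+c-1/2)" by (rule arg_cong[where f=Gamma]) auto
  have e11: "rGamma (a-(b+1)-c+1/2) = (a-(b+1)-c+1/2)*rGamma(a-b-c+1/2)" by (rule rG1) auto
  show ?thesis
    unfolding F0_prod Hb_def neg1_pow_plus1 e1 e2 e3 e4 e5 e6 e7 e8 e9 e10 e11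
    by (simp add: algebra_simps)
qed

lemma step_c:
  assumes "2*a+x \<notin> \<int>\<^sub>\<le>\<^sub>0" "2*b+x \<notin> \<int>\<^sub>\<le>\<^sub>0" "2*c \<notin> \<int>\<^sub>\<le>\<^sub>0" "a-b+c+1/2 \<notin> \<int>\<^sub>\<le>\<^sub>0"
  shows "F0 x a b (c+1) - F0 x a b c = Hc (x+1) a b c - Hc x a b c"
proof -
  have e1: "Gamma (2*(c+1)) = (2*c)*(2*c+1)*Gamma(2*c)" by (rule G2) (use assms in auto)
  have e2: "Gamma (2*a+(x+1)) = (2*a+x)*Gamma(2*a+x)" by (rule G1) (use assms in auto)
  have e3: "Gamma (2*b+(x+1)) = (2*b+x)*Gamma(2*b+x)" by (rule G1) (use assms in auto)
  have e4: "rGamma (2*a+2*c+x) = (2*a+2*c+x)*(2*a+2*c+x+1)*rGamma(2*a+2*(c+1)+x)" by (rule rG2) auto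
  have e5: "rGamma (2*a+2*c+x+1) = (2*a+2*c+x+1)*rGamma(2*a+2*(c+1)+x)" by (rule rG1) auto
  have e6: "rGamma (2*a+2*c+(x+1)+1) = rGamma(2*a+2*(c+1)+x)" by (rule arg_cong[where f=rGamma]) auto
  have e7: "rGamma (2*b+2*c+x) = (2*b+2*c+x)*(2*b+2*c+x+1)*rGamma(2*b+2*(c+1)+x)" by (rule rG2) auto
  have e8: "rGamma (2*b+2*c+x+1) = (2*b+2*c+x+1)*rGamma(2*b+2*(c+1)+x)" by (rule rG1) auto
  have e9: "rGamma (2*b+2*c+(x+1)+1) = rGamma(2*b+2*(c+1)+x)" by (rule arg_cong[where f=rGamma]) auto
  have e10: "Gamma (a-b+(c+1)+1/2) = (a-b+c+1/2)*Gamma(a-b+c+1/2)" by (rule G1) (use assms in auto)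
  have e11: "rGamma (a-b-(c+1)+1/2) = (a-b-(c+1)+1/2)*rGamma(a-b-c+1/2)" by (rule rG1) auto
  show ?thesis
    unfolding F0_prod Hc_def neg1_pow_plus1 e1 e2 e3 e4 e5 e6 e7 e8 e9 e10 e11
    by (simp add: field_simps power2_eq_square)
qed



inductive polyfun :: "(int \<Rightarrow> int \<Rightarrow> complex) \<Rightarrow> bool" where
  pf_const: "polyfun (\<lambda>n k. c)"
| pf_n: "polyfun (\<lambda>n k. of_int n)"
| pf_k: "polyfun (\<lambda>n k. of_int k)"
| pf_add: "polyfun f \<Longrightarrow> polyfun g \<Longrightarrow> polyfun (\<lambda>n k. f n k + g n k)"
| pf_mult: "polyfun f \<Longrightarrow> polyfun g \<Longrightarrow> polyfun (\<lambda>n k. f n k * g n k)"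

lemma pf_diff: "polyfun f \<Longrightarrow> polyfun g \<Longrightarrow> polyfun (\<lambda>n k. f n k - g n k)"
proof -
  assume "polyfun f" "polyfun g"
  then have "polyfun (\<lambda>n k. f n k + (-1) * g n k)" by (intro pf_add pf_mult pf_const)
  then show ?thesis by simp
qed

lemma pf_intn: "polyfun (\<lambda>n k. of_int (A*n))"
proof -
  have "polyfun (\<lambda>n k. of_int A * of_int n)" by (intro pf_mult pf_const pf_n)
  then show ?thesis by simp
qed

lemma pf_poch: "polyfun L \<Longrightarrow> polyfun (\<lambda>n k. pochhammer (L n k) N)"
proof (induction N)
  case 0 then show ?case by (simp add: pf_const)
next
  case (Suc N)
  have "polyfun (\<lambda>n k. pochhammer (L n k) N * (L n k + of_nat N))"
    using Suc by (intro pf_mult pf_add pf_const) auto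
  then show ?case by (simp add: pochhammer_Suc)
qed

lemma pf_shift: "polyfun f \<Longrightarrow> polyfun (\<lambda>n k. f (n+i) (k+j))"
proof (induction rule: polyfun.induct)
  case (pf_n)
  have "polyfun (\<lambda>n k. of_int n + of_int i)" by (intro pf_add polyfun.pf_n pf_const)
  then show ?case by simp
next
  case (pf_k)
  have "polyfun (\<lambda>n k. of_int k + of_int j)" by (intro pf_add polyfun.pf_k pf_const)
  then show ?case by simp
qed (auto intro: polyfun.intros)

lemma poly2_alt: "poly2 P x y = poly (poly P [:y:]) x"
proof (induction P)
  case (pCons c P)
  then show ?case by (simp add: poly2_def map_poly_pCons)
qed (simp add: poly2_def)

lemma polyfun_poly2: "polyfun f \<Longrightarrow> \<exists>P. \<forall>n k. f n k = poly2 P (of_int n) (of_int k)"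
proof (induction rule: polyfun.induct)
  case (pf_const c)
  show ?case by (rule exI[of _ "[:[:c:]:]"]) (simp add: poly2_alt)
next
  case pf_n
  show ?case by (rule exI[of _ "[:[:0,1:]:]"]) (simp add: poly2_alt)
next
  case pf_k
  show ?case by (rule exI[of _ "[:0,1:]"]) (simp add: poly2_alt)
next
  case (pf_add f g)
  then obtain P Q where "\<forall>n k. f n k = poly2 P (of_int n) (of_int k)" "\<forall>n k. g n k = poly2 Q (of_int n) (of_int k)" by blast
  then show ?case by (intro exI[of _ "P+Q"]) (simp add: poly2_alt)
next
  case (pf_mult f g)
  then obtain P Q where "\<forall>n k. f n k = poly2 P (of_int n) (of_int k)" "\<forall>n k. g n k = poly2 Q (of_int n) (of_int k)" by blast
  then show ?case by (intro exI[of _ "P*Q"]) (simp add: poly2_alt)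
qed

definition W :: "(int \<Rightarrow> int \<Rightarrow> complex) \<Rightarrow> (int \<Rightarrow> int \<Rightarrow> complex) \<Rightarrow> bool" where
  "W T S \<longleftrightarrow> (\<exists>u v. polyfun u \<and> polyfun v \<and> (\<forall>n k. u n k \<noteq> 0) \<and> (\<forall>n k. u n k * T n k = v n k * S n k))"

lemma W_refl: "W S S"
  unfolding W_def by (rule exI[of _ "\<lambda>n k. 1"], rule exI[of _ "\<lambda>n k. 1"]) (simp add: pf_const)

lemma W_eq: "W T S \<Longrightarrow> (\<And>n k. T' n k = T n k) \<Longrightarrow> (\<And>n k. S' n k = S n k) \<Longrightarrow> W T' S'"
  unfolding W_def by simp

lemma W_trans: assumes "W T S" "W S R" shows "W T R"
proof -
  obtain u v where uv: "polyfun u" "polyfun v" "\<forall>n k. u n k \<noteq> 0" "\<forall>n k. u n k * T n k = v n k * S n k"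
    using assms(1) unfolding W_def by blast
  obtain u' v' where uv': "polyfun u'" "polyfun v'" "\<forall>n k. u' n k \<noteq> 0" "\<forall>n k. u' n k * S n k = v' n k * R n k"
    using assms(2) unfolding W_def by blast
  show ?thesis unfolding W_def
  proof (intro exI conjI allI)
    show "polyfun (\<lambda>n k. u' n k * u n k)" "polyfun (\<lambda>n k. v n k * v' n k)" using uv uv' by (auto intro: pf_mult)
    fix n k
    show "u' n k * u n k \<noteq> 0" using uv uv' by simp
    have "u' n k * u n k * T n k = u' n k * (v n k * S n k)" using uv(4) by (simp add: mult.assoc)
    also have "\<dots> = v n k * (u' n k * S n k)" by (simp add: algebra_simps)
    also have "\<dots> = v n k * v' n k * R n k" using uv'(4) by (simp add: mult.assoc)
    finally show "u' n k * u n k * T n k = v n k * v' n k * R n k" .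
  qed
qed

lemma W_mult: assumes "W T1 S1" "W T2 S2" shows "W (\<lambda>n k. T1 n k * T2 n k) (\<lambda>n k. S1 n k * S2 n k)"
proof -
  obtain u v where uv: "polyfun u" "polyfun v" "\<forall>n k. u n k \<noteq> 0" "\<forall>n k. u n k * T1 n k = v n k * S1 n k"
    using assms(1) unfolding W_def by blast
  obtain u' v' where uv': "polyfun u'" "polyfun v'" "\<forall>n k. u' n k \<noteq> 0" "\<forall>n k. u' n k * T2 n k = v' n k * S2 n k"
    using assms(2) unfolding W_def by blast
  show ?thesis unfolding W_def
  proof (intro exI conjI allI)
    show "polyfun (\<lambda>n k. u n k * u' n k)" "polyfun (\<lambda>n k. v n k * v' n k)" using uv uv' by (auto intro: pf_mult)
    fix n k
    show "u n k * u' n k \<noteq> 0" using uv uv' by simp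
    have "u n k * u' n k * (T1 n k * T2 n k) = (u n k * T1 n k) * (u' n k * T2 n k)" by (simp add: algebra_simps)
    also have "\<dots> = v n k * v' n k * (S1 n k * S2 n k)" using uv(4) uv'(4) by (simp add: algebra_simps)
    finally show "u n k * u' n k * (T1 n k * T2 n k) = v n k * v' n k * (S1 n k * S2 n k)" .
  qed
qed

lemma W_add: assumes "W T1 S" "W T2 S" shows "W (\<lambda>n k. T1 n k + T2 n k) S"
proof -
  obtain u v where uv: "polyfun u" "polyfun v" "\<forall>n k. u n k \<noteq> 0" "\<forall>n k. u n k * T1 n k = v n k * S n k"
    using assms(1) unfolding W_def by blast
  obtain u' v' where uv': "polyfun u'" "polyfun v'" "\<forall>n k. u' n k \<noteq> 0" "\<forall>n k. u' n k * T2 n k = v' n k * S n k"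
    using assms(2) unfolding W_def by blast
  show ?thesis unfolding W_def
  proof (intro exI conjI allI)
    show "polyfun (\<lambda>n k. u n k * u' n k)" "polyfun (\<lambda>n k. v n k * u' n k + v' n k * u n k)"
      using uv uv' by (auto intro: pf_mult pf_add)
    fix n k
    show "u n k * u' n k \<noteq> 0" using uv uv' by simp
    have "u n k * u' n k * (T1 n k + T2 n k) = u' n k * (u n k * T1 n k) + u n k * (u' n k * T2 n k)" by (simp add: algebra_simps)
    also have "\<dots> = (v n k * u' n k + v' n k * u n k) * S n k" using uv(4) uv'(4) by (simp add: algebra_simps)
    finally show "u n k * u' n k * (T1 n k + T2 n k) = (v n k * u' n k + v' n k * u n k) * S n k" .
  qed
qed

lemma W_zero: "W (\<lambda>n k. 0) S"
  unfolding W_def by (rule exI[of _ "\<lambda>n k. 1"], rule exI[of _ "\<lambda>n k. 0"]) (simp add: pf_const)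

lemma W_poly: "polyfun p \<Longrightarrow> W p (\<lambda>n k. 1)"
  unfolding W_def by (rule exI[of _ "\<lambda>n k. 1"], rule exI[of _ p]) (simp add: pf_const)

lemma W_polymult: "polyfun p \<Longrightarrow> W T S \<Longrightarrow> W (\<lambda>n k. T n k * p n k) S"
  using W_mult[of T S p "\<lambda>n k. 1"] W_poly by simp

lemma W_sum: "finite I \<Longrightarrow> (\<And>j. j \<in> I \<Longrightarrow> W (T j) S) \<Longrightarrow> W (\<lambda>n k. \<Sum>j\<in>I. T j n k) S"
proof (induction I rule: finite_induct)
  case empty then show ?case by (simp add: W_zero)
next
  case (insert x F)
  then have "W (\<lambda>n k. T x n k + (\<Sum>j\<in>F. T j n k)) S" by (intro W_add) auto
  then show ?case using insert by simp
qed

lemma W_shift: assumes "W T S" shows "W (\<lambda>n k. T (n+i) (k+j)) (\<lambda>n k. S (n+i) (k+j))"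
proof -
  obtain u v where uv: "polyfun u" "polyfun v" "\<forall>n k. u n k \<noteq> 0" "\<forall>n k. u n k * T n k = v n k * S n k"
    using assms(1) unfolding W_def by blast
  show ?thesis unfolding W_def
    by (rule exI[of _ "\<lambda>n k. u (n+i) (k+j)"], rule exI[of _ "\<lambda>n k. v (n+i) (k+j)"])
       (use uv pf_shift in auto)
qed

definition ssum :: "int \<Rightarrow> (int \<Rightarrow> complex) \<Rightarrow> complex" where
  "ssum m f = (if 0 \<le> m then (\<Sum>i<nat m. f (int i)) else - (\<Sum>i<nat (-m). f (m + int i)))"

lemma ssum_zero [simp]: "ssum 0 f = 0" by (simp add: ssum_def)

lemma ssum_diff: "ssum m f - ssum m g = ssum m (\<lambda>j. f j - g j)"
  by (simp add: ssum_def sum_subtractf)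

lemma ssum_tele: assumes "m \<noteq> 0 \<Longrightarrow> \<forall>j. g j = f (j+1) - f j" shows "ssum m g = f m - f 0"
proof (cases "m = 0")
  case True then show ?thesis by simp
next
  case False
  then have g: "\<And>j. g j = f (j+1) - f j" using assms by blast
  show ?thesis
  proof (cases "0 \<le> m")
    case True
    have "(\<Sum>i<nat m. g (int i)) = (\<Sum>i<nat m. f (int (Suc i)) - f (int i))" by (simp add: g add.commute)
    also have "\<dots> = f (int (nat m)) - f (int 0)" by (rule sum_lessThan_telescope)
    finally show ?thesis using True by (simp add: ssum_def)
  next
    case False
    have "(\<Sum>i<nat (-m). g (m + int i)) = (\<Sum>i<nat (-m). f (m + int (Suc i)) - f (m + int i))" by (simp add: g algebra_simps)
    also have "\<dots> = f (m + int (nat (-m))) - f (m + int 0)" by (rule sum_lessThan_telescope)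
    finally show ?thesis using False by (simp add: ssum_def)
  qed
qed

lemma W_ssum: assumes "m \<noteq> 0 \<Longrightarrow> (\<And>j. W (T j) S)" shows "W (\<lambda>n k. ssum m (\<lambda>j. T j n k)) S"
proof (cases "m = 0")
  case True then show ?thesis by (simp add: W_zero)
next
  case False
  note T = assms[OF False]
  show ?thesis
  proof (cases "0 \<le> m")
    case True
    have "W (\<lambda>n k. \<Sum>i<nat m. T (int i) n k) S" by (intro W_sum T) auto
    then show ?thesis using True by (simp add: ssum_def)
  next
    case False
    have "W (\<lambda>n k. \<Sum>i<nat (-m). T (m + int i) n k) S" by (intro W_sum T) auto
    then have "W (\<lambda>n k. (\<Sum>i<nat (-m). T (m + int i) n k) * (-1)) S" by (intro W_polymult pf_const)
    then show ?thesis using False by (simp add: ssum_def)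
  qed
qed



lemma poch_nz: "z \<notin> \<int>\<^sub>\<le>\<^sub>0 \<Longrightarrow> pochhammer (z::complex) N \<noteq> 0"
  by (auto simp: pochhammer_eq_0_iff)

lemma W_Gamma:
  assumes L: "polyfun L" and h1: "\<forall>n k. L n k \<notin> \<int>\<^sub>\<le>\<^sub>0" and h2: "\<forall>n k. L n k + of_int m \<notin> \<int>\<^sub>\<le>\<^sub>0"
  shows "W (\<lambda>n k. Gamma (L n k + of_int m)) (\<lambda>n k. Gamma (L n k))"
proof (cases "0 \<le> m")
  case True
  then obtain N where m: "m = int N" by (metis nonneg_eq_int)
  show ?thesis unfolding W_def
  proof (rule exI[of _ "\<lambda>n k. 1"], rule exI[of _ "\<lambda>n k. pochhammer (L n k) N"], intro conjI allI)
    show "polyfun (\<lambda>n k. 1)" by (rule pf_const)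
    show "polyfun (\<lambda>n k. pochhammer (L n k) N)" using L by (rule pf_poch)
    fix n k
    show "(1::complex) \<noteq> 0" by simp
    have "pochhammer (L n k) N = Gamma (L n k + of_nat N) / Gamma (L n k)"
      using h1 by (intro pochhammer_Gamma) auto
    moreover have "Gamma (L n k) \<noteq> 0" using h1 by (intro Gamma_nonzero) auto
    ultimately show "1 * Gamma (L n k + of_int m) = pochhammer (L n k) N * Gamma (L n k)"
      using m by simp
  qed
next
  case False
  define N where "N = nat (-m)"
  have m: "m = - int N" using False N_def by simp
  have L': "polyfun (\<lambda>n k. L n k + of_int m)" using L by (intro pf_add pf_const)
  show ?thesis unfolding W_def
  proof (rule exI[of _ "\<lambda>n k. pochhammer (L n k + of_int m) N"], rule exI[of _ "\<lambda>n k. 1"], intro conjI allI)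
    show "polyfun (\<lambda>n k. 1)" by (rule pf_const)
    show "polyfun (\<lambda>n k. pochhammer (L n k + of_int m) N)" using L' by (rule pf_poch)
    fix n k
    show "pochhammer (L n k + of_int m) N \<noteq> 0" using h2 by (intro poch_nz) auto
    have "pochhammer (L n k + of_int m) N = Gamma (L n k + of_int m + of_nat N) / Gamma (L n k + of_int m)"
      using h2 by (intro pochhammer_Gamma) auto
    moreover have "Gamma (L n k + of_int m) \<noteq> 0" using h2 by (intro Gamma_nonzero) auto
    moreover have "L n k + of_int m + of_nat N = L n k" using m by simp
    ultimately show "pochhammer (L n k + of_int m) N * Gamma (L n k + of_int m) = 1 * Gamma (L n k)"
      by simp
  qed
qed

lemma W_rGamma:
  assumes L: "polyfun L" and h1: "\<forall>n k. L n k \<notin> \<int>\<^sub>\<le>\<^sub>0"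
  shows "W (\<lambda>n k. rGamma (L n k + of_int m)) (\<lambda>n k. rGamma (L n k))"
proof (cases "0 \<le> m")
  case True
  then obtain N where m: "m = int N" by (metis nonneg_eq_int)
  show ?thesis unfolding W_def
  proof (rule exI[of _ "\<lambda>n k. pochhammer (L n k) N"], rule exI[of _ "\<lambda>n k. 1"], intro conjI allI)
    show "polyfun (\<lambda>n k. 1)" by (rule pf_const)
    show "polyfun (\<lambda>n k. pochhammer (L n k) N)" using L by (rule pf_poch)
    fix n k
    show "pochhammer (L n k) N \<noteq> 0" using h1 by (intro poch_nz) auto
    show "pochhammer (L n k) N * rGamma (L n k + of_int m) = 1 * rGamma (L n k)"
      using m pochhammer_rGamma[of "L n k" N] by simp
  qed
next
  case False
  define N where "N = nat (-m)"
  have m: "m = - int N" using False N_def by simp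
  have L': "polyfun (\<lambda>n k. L n k + of_int m)" using L by (intro pf_add pf_const)
  show ?thesis unfolding W_def
  proof (rule exI[of _ "\<lambda>n k. 1"], rule exI[of _ "\<lambda>n k. pochhammer (L n k + of_int m) N"], intro conjI allI)
    show "polyfun (\<lambda>n k. 1)" by (rule pf_const)
    show "polyfun (\<lambda>n k. pochhammer (L n k + of_int m) N)" using L' by (rule pf_poch)
    fix n k
    show "(1::complex) \<noteq> 0" by simp
    have e: "L n k + of_int m + of_nat N = L n k" using m by simp
    show "1 * rGamma (L n k + of_int m) = pochhammer (L n k + of_int m) N * rGamma (L n k)"
      using pochhammer_rGamma[of "L n k + of_int m" N] unfolding e by simp
  qed
qed

lemma W_neg1: "W (\<lambda>n k. neg1_pow (X n k + of_int m)) (\<lambda>n k. neg1_pow (X n k))"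
  unfolding W_def
  by (rule exI[of _ "\<lambda>n k. 1"], rule exI[of _ "\<lambda>n k. exp (complex_of_real pi * \<i> * of_int m)"])
     (simp add: pf_const neg1_pow_shift)

lemma poly2_zero: "poly2 0 x y = 0" by (simp add: poly2_alt)
lemma poly2_one: "poly2 1 x y = 1" by (simp add: poly2_alt)

lemma rel_from_W:
  assumes "W G F" "W G' F" "G n0 k0 \<noteq> 0"
  shows "\<exists>P Q. Q \<noteq> 0 \<and> (\<forall>n k. poly2 Q (of_int n) (of_int k) * G' n k = poly2 P (of_int n) (of_int k) * G n k)"
proof -
  obtain u v where uv: "polyfun u" "polyfun v" "\<forall>n k. u n k \<noteq> 0" "\<forall>n k. u n k * G n k = v n k * F n k"
    using assms(1) unfolding W_def by blast
  obtain u' v' where uv': "polyfun u'" "polyfun v'" "\<forall>n k. u' n k \<noteq> 0" "\<forall>n k. u' n k * G' n k = v' n k * F n k"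
    using assms(2) unfolding W_def by blast
  have "polyfun (\<lambda>n k. u' n k * v n k)" using uv uv' by (intro pf_mult)
  then obtain Q where Q: "\<forall>n k. u' n k * v n k = poly2 Q (of_int n) (of_int k)" using polyfun_poly2 by blast
  have "polyfun (\<lambda>n k. v' n k * u n k)" using uv uv' by (intro pf_mult)
  then obtain P where P: "\<forall>n k. v' n k * u n k = poly2 P (of_int n) (of_int k)" using polyfun_poly2 by blast
  have "v n0 k0 \<noteq> 0"
  proof
    assume "v n0 k0 = 0"
    then have "u n0 k0 * G n0 k0 = 0" using uv(4) by simp
    then show False using uv(3) assms(3) by simp
  qed
  then have "poly2 Q (of_int n0) (of_int k0) \<noteq> 0" using Q uv'(3) by (metis mult_eq_0_iff)
  then have "Q \<noteq> 0" using poly2_zero by metis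
  moreover have "\<forall>n k. poly2 Q (of_int n) (of_int k) * G' n k = poly2 P (of_int n) (of_int k) * G n k"
  proof (intro allI)
    fix n k
    have "poly2 Q (of_int n) (of_int k) * G' n k = v n k * (u' n k * G' n k)" using Q by (metis mult.commute mult.left_commute)
    also have "\<dots> = v' n k * (v n k * F n k)" using uv'(4) by simp
    also have "\<dots> = v' n k * (u n k * G n k)" using uv(4) by simp
    also have "\<dots> = poly2 P (of_int n) (of_int k) * G n k" using P by (metis mult.assoc)
    finally show "poly2 Q (of_int n) (of_int k) * G' n k = poly2 P (of_int n) (of_int k) * G n k" .
  qed
  ultimately show ?thesis by blast
qed

lemma hyp_from_W:
  assumes "W G F" "W (\<lambda>n k. G (n+1) k) F" "W (\<lambda>n k. G n (k+1)) F"
  shows "hypergeometric2 G"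
proof (cases "\<forall>n k. G n k = 0")
  case True
  show ?thesis unfolding hypergeometric2_def
    by (rule exI[of _ 0], rule exI[of _ 1], rule exI[of _ 0], rule exI[of _ 1]) (simp add: True poly2_one)
next
  case False
  then obtain n0 k0 where nz: "G n0 k0 \<noteq> 0" by blast
  obtain P1 Q1 where 1: "Q1 \<noteq> 0" "\<forall>n k. poly2 Q1 (of_int n) (of_int k) * G (n+1) k = poly2 P1 (of_int n) (of_int k) * G n k"
    using rel_from_W[OF assms(1) assms(2) nz] by blast
  obtain P2 Q2 where 2: "Q2 \<noteq> 0" "\<forall>n k. poly2 Q2 (of_int n) (of_int k) * G n (k+1) = poly2 P2 (of_int n) (of_int k) * G n k"
    using rel_from_W[OF assms(1) assms(3) nz] by blast
  show ?thesis unfolding hypergeometric2_def using 1 2 by blast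
qed

lemma nonint:
  fixes w :: complex
  assumes "D \<noteq> 0" "\<forall>n::int. of_int (D*n) + w \<notin> \<int>\<^sub>\<le>\<^sub>0"
  shows "w + of_int m \<notin> \<int>\<^sub>\<le>\<^sub>0"
proof
  assume "w + of_int m \<in> \<int>\<^sub>\<le>\<^sub>0"
  then obtain z0 :: int where "w + of_int m = of_int z0" by (metis Ints_cases nonpos_Ints_Int)
  then have wz: "w = of_int (z0 - m)" by (simp add: algebra_simps)
  define z where "z = z0 - m"
  define n where "n = (if z \<ge> 0 then - z * D else 0)"
  have "D*n + z \<le> 0"
  proof (cases "z \<ge> 0")
    case True
    have "0 < D*D" using assms(1) by (auto simp add: zero_less_mult_iff linorder_neq_iff)
    then have "1 \<le> D*D" by linarith
    then have "z * 1 \<le> z * (D * D)" using True by (intro mult_left_mono) auto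
    moreover have "D*n + z = z - z*(D*D)" using True by (simp add: n_def algebra_simps)
    ultimately show ?thesis by linarith
  next
    case False then show ?thesis by (simp add: n_def)
  qed
  moreover have "of_int (D*n) + w = of_int (D*n + z)" using wz z_def by simp
  ultimately have "of_int (D*n) + w \<in> \<int>\<^sub>\<le>\<^sub>0"
    by (metis nonpos_Ints_of_int)
  then show False using assms(2) by blast
qed



lemma pf_pow: "polyfun f \<Longrightarrow> polyfun (\<lambda>n k. f n k ^ N)"
proof (induction N)
  case 0 then show ?case by (simp add: pf_const)
next
  case (Suc N)
  then have "polyfun (\<lambda>n k. f n k * f n k ^ N)" by (intro pf_mult)
  then show ?case by simp
qed

lemma pf_divc: "polyfun f \<Longrightarrow> polyfun (\<lambda>n k. f n k / c)"
proof -
  assume "polyfun f"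
  then have "polyfun (\<lambda>n k. f n k * (1/c))" by (intro pf_mult pf_const)
  then show ?thesis by simp
qed

locale wz =
  fixes K A B C :: int and k0 a b c :: complex
  assumes reg: "F_regular K A B C k0 a b c"
begin

definition X :: "int \<Rightarrow> int \<Rightarrow> complex" where "X n k = of_int (K*n) + k0 + of_int k"
definition P :: "int \<Rightarrow> complex" where "P n = of_int (A*n) + a"
definition Q :: "int \<Rightarrow> complex" where "Q n = of_int (B*n) + b"
definition R :: "int \<Rightarrow> complex" where "R n = of_int (C*n) + c"

definition L1 :: "int \<Rightarrow> int \<Rightarrow> complex" where "L1 n k = 2*P n + X n k"
definition L2 :: "int \<Rightarrow> int \<Rightarrow> complex" where "L2 n k = 2*Q n + X n k"
definition L3 :: "int \<Rightarrow> int \<Rightarrow> complex" where "L3 n k = 2*P n + 2*R n + X n k"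
definition L4 :: "int \<Rightarrow> int \<Rightarrow> complex" where "L4 n k = 2*Q n + 2*R n + X n k"
definition L5 :: "int \<Rightarrow> int \<Rightarrow> complex" where "L5 n k = 2*R n"
definition L6 :: "int \<Rightarrow> int \<Rightarrow> complex" where "L6 n k = P n - Q n + R n + 1/2"
definition L7 :: "int \<Rightarrow> int \<Rightarrow> complex" where "L7 n k = P n - Q n - R n + 1/2"

lemmas Ldefs = L1_def L2_def L3_def L4_def L5_def L6_def L7_def X_def P_def Q_def R_def

definition Fam :: "int \<Rightarrow> int \<Rightarrow> int \<Rightarrow> int \<Rightarrow> int \<Rightarrow> int \<Rightarrow> int \<Rightarrow> int \<Rightarrow> int \<Rightarrow> int \<Rightarrow> complex" where
  "Fam mx e1 e2 e3 e4 e5 e6 e7 n k = neg1_pow (X n k + of_int mx) * Gamma (L1 n k + of_int e1) *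
     Gamma (L2 n k + of_int e2) * rGamma (L3 n k + of_int e3) * rGamma (L4 n k + of_int e4) *
     Gamma (L5 n k + of_int e5) * Gamma (L6 n k + of_int e6) * rGamma (L7 n k + of_int e7)"

abbreviation "FF \<equiv> F_spec K A B C k0 a b c"

lemma regs: "\<forall>n k. L1 n k \<notin> \<int>\<^sub>\<le>\<^sub>0 \<and> L2 n k \<notin> \<int>\<^sub>\<le>\<^sub>0 \<and> L3 n k \<notin> \<int>\<^sub>\<le>\<^sub>0 \<and>
   L4 n k \<notin> \<int>\<^sub>\<le>\<^sub>0 \<and> L5 n k \<notin> \<int>\<^sub>\<le>\<^sub>0 \<and> L6 n k \<notin> \<int>\<^sub>\<le>\<^sub>0 \<and> L7 n k \<notin> \<int>\<^sub>\<le>\<^sub>0"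
  using reg unfolding F_regular_def Let_def Ldefs by simp

lemma Xs: "X n (k + m) = X n k + of_int m" by (simp add: X_def)

lemma r1: "L1 n k + of_int m \<notin> \<int>\<^sub>\<le>\<^sub>0"
proof -
  have "L1 n k + of_int m = L1 n (k+m)" by (simp add: L1_def Xs add.assoc)
  then show ?thesis using regs by simp
qed
lemma r2: "L2 n k + of_int m \<notin> \<int>\<^sub>\<le>\<^sub>0"
proof -
  have "L2 n k + of_int m = L2 n (k+m)" by (simp add: L2_def Xs add.assoc)
  then show ?thesis using regs by simp
qed

lemma r5: assumes "m = 0 \<or> C \<noteq> 0" shows "L5 n k + of_int m \<notin> \<int>\<^sub>\<le>\<^sub>0"
proof (cases "C = 0")
  case True then show ?thesis using assms regs by auto
next
  case False
  have "\<forall>n. of_int ((2*C)*n) + 2*c \<notin> \<int>\<^sub>\<le>\<^sub>0"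
  proof
    fix n
    have "of_int ((2*C)*n) + 2*c = L5 n 0" by (simp add: L5_def R_def algebra_simps)
    then show "of_int ((2*C)*n) + 2*c \<notin> \<int>\<^sub>\<le>\<^sub>0" using regs by simp
  qed
  then have "2*c + of_int (2*C*n + m) \<notin> \<int>\<^sub>\<le>\<^sub>0" using False by (intro nonint[of "2*C"]) auto
  moreover have "2*c + of_int (2*C*n + m) = L5 n k + of_int m" by (simp add: L5_def R_def algebra_simps)
  ultimately show ?thesis by metis
qed

lemma r6: assumes "m = 0 \<or> A - B + C \<noteq> 0" shows "L6 n k + of_int m \<notin> \<int>\<^sub>\<le>\<^sub>0"
proof (cases "A - B + C = 0")
  case True then show ?thesis using assms regs by auto
next
  case False
  have "\<forall>n. of_int ((A-B+C)*n) + (a-b+c+1/2) \<notin> \<int>\<^sub>\<le>\<^sub>0"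
  proof
    fix n
    have "of_int ((A-B+C)*n) + (a-b+c+1/2) = L6 n 0" by (simp add: L6_def P_def Q_def R_def algebra_simps)
    then show "of_int ((A-B+C)*n) + (a-b+c+1/2) \<notin> \<int>\<^sub>\<le>\<^sub>0" using regs by simp
  qed
  then have "(a-b+c+1/2) + of_int ((A-B+C)*n + m) \<notin> \<int>\<^sub>\<le>\<^sub>0" using False by (intro nonint[of "A-B+C"]) auto
  moreover have "(a-b+c+1/2) + of_int ((A-B+C)*n + m) = L6 n k + of_int m"
    by (simp add: L6_def P_def Q_def R_def algebra_simps)
  ultimately show ?thesis by metis
qed

lemma pfX: "polyfun X"
proof -
  have "polyfun (\<lambda>n k. of_int (K*n) + k0 + of_int k)" by (intro pf_add pf_intn pf_const pf_k)
  then show ?thesis by (simp add: X_def[abs_def])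
qed
lemma pfP: "polyfun (\<lambda>n k. P n)"
  unfolding P_def by (intro pf_add pf_intn pf_const)
lemma pfQ: "polyfun (\<lambda>n k. Q n)"
  unfolding Q_def by (intro pf_add pf_intn pf_const)
lemma pfR: "polyfun (\<lambda>n k. R n)"
  unfolding R_def by (intro pf_add pf_intn pf_const)
lemma pfX': "polyfun (\<lambda>n k. X n k)" using pfX by simp

lemmas pfI = pf_add pf_mult pf_diff pf_const pfP pfQ pfR pfX' pf_pow pf_divc

lemma pfL: "polyfun L1" "polyfun L2" "polyfun L3" "polyfun L4" "polyfun L5" "polyfun L6" "polyfun L7"
proof -
  have "polyfun (\<lambda>n k. 2*P n + X n k)" by (intro pfI)
  then show "polyfun L1" by (simp add: L1_def[abs_def])
  have "polyfun (\<lambda>n k. 2*Q n + X n k)" by (intro pfI)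
  then show "polyfun L2" by (simp add: L2_def[abs_def])
  have "polyfun (\<lambda>n k. 2*P n + 2*R n + X n k)" by (intro pfI)
  then show "polyfun L3" by (simp add: L3_def[abs_def])
  have "polyfun (\<lambda>n k. 2*Q n + 2*R n + X n k)" by (intro pfI)
  then show "polyfun L4" by (simp add: L4_def[abs_def])
  have "polyfun (\<lambda>n k. 2*R n)" by (intro pfI)
  then show "polyfun L5" by (simp add: L5_def[abs_def])
  have "polyfun (\<lambda>n k. P n - Q n + R n + 1/2)" by (intro pfI)
  then show "polyfun L6" by (simp add: L6_def[abs_def])
  have "polyfun (\<lambda>n k. P n - Q n - R n + 1/2)" by (intro pfI)
  then show "polyfun L7" by (simp add: L7_def[abs_def])
qed

lemma W_Fam:
  assumes "e5 = 0 \<or> C \<noteq> 0" "e6 = 0 \<or> A - B + C \<noteq> 0"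
  shows "W (Fam mx e1 e2 e3 e4 e5 e6 e7) FF"
proof -
  have f0: "W (\<lambda>n k. neg1_pow (X n k + of_int mx)) (\<lambda>n k. neg1_pow (X n k))" by (rule W_neg1)
  have f1: "W (\<lambda>n k. Gamma (L1 n k + of_int e1)) (\<lambda>n k. Gamma (L1 n k))"
    using regs r1 by (intro W_Gamma pfL) auto
  have f2: "W (\<lambda>n k. Gamma (L2 n k + of_int e2)) (\<lambda>n k. Gamma (L2 n k))"
    using regs r2 by (intro W_Gamma pfL) auto
  have f3: "W (\<lambda>n k. rGamma (L3 n k + of_int e3)) (\<lambda>n k. rGamma (L3 n k))"
    using regs by (intro W_rGamma pfL) auto
  have f4: "W (\<lambda>n k. rGamma (L4 n k + of_int e4)) (\<lambda>n k. rGamma (L4 n k))"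
    using regs by (intro W_rGamma pfL) auto
  have f5: "W (\<lambda>n k. Gamma (L5 n k + of_int e5)) (\<lambda>n k. Gamma (L5 n k))"
    using regs r5 assms by (intro W_Gamma pfL) auto
  have f6: "W (\<lambda>n k. Gamma (L6 n k + of_int e6)) (\<lambda>n k. Gamma (L6 n k))"
    using regs r6 assms by (intro W_Gamma pfL) auto
  have f7: "W (\<lambda>n k. rGamma (L7 n k + of_int e7)) (\<lambda>n k. rGamma (L7 n k))"
    using regs by (intro W_rGamma pfL) auto
  have "W (\<lambda>n k. neg1_pow (X n k + of_int mx) * Gamma (L1 n k + of_int e1) *
     Gamma (L2 n k + of_int e2) * rGamma (L3 n k + of_int e3) * rGamma (L4 n k + of_int e4) *
     Gamma (L5 n k + of_int e5) * Gamma (L6 n k + of_int e6) * rGamma (L7 n k + of_int e7))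
     (\<lambda>n k. neg1_pow (X n k) * Gamma (L1 n k) *
     Gamma (L2 n k) * rGamma (L3 n k) * rGamma (L4 n k) *
     Gamma (L5 n k) * Gamma (L6 n k) * rGamma (L7 n k))"
    by (intro W_mult f0 f1 f2 f3 f4 f5 f6 f7)
  then show ?thesis
    by (rule W_eq) (simp_all add: Fam_def F_spec_def F0_prod Ldefs)
qed

end


context wz begin

lemma TF: "F0 (X n k + of_int j) (P n + of_int A) (Q n + of_int B) (R n + of_int C) =
  Fam j (2*A+j) (2*B+j) (2*A+2*C+j) (2*B+2*C+j) (2*C) (A-B+C) (A-B-C) n k"
  unfolding F0_prod Fam_def Ldefs by (simp add: algebra_simps)

lemma TA: "Ha (X n k) (P n + of_int j) (Q n + of_int j) (R n) =
  Fam 0 (2*j) (2*j) (2*j+1) (2*j) 0 0 1 n k * (R n * (1 - 2*(Q n + of_int j) - 2*R n - X n k))"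
  unfolding Ha_def Fam_def Ldefs by (simp add: algebra_simps)

lemma TB1: "Hb (X n k) (P n + of_int j + 1) (Q n + of_int j) (R n) =
  Fam 0 (2*j+2) (2*j) (2*j+2) (2*j+1) 0 0 1 n k * (R n * (2*(P n + of_int j + 1) + 2*R n + X n k - 1))"
  unfolding Hb_def Fam_def Ldefs by (simp add: algebra_simps)

lemma TC: "Hc (X n k) (P n + of_int A) (Q n + of_int A + of_int j) (R n + of_int j) =
  Fam 0 (2*A) (2*A+2*j) (2*A+2*j+1) (2*A+4*j+1) (2*j) 0 (-2*j) n k *
   (((X n k)^2 + (2*(P n + of_int A)+2*(Q n + of_int A + of_int j)+6*(R n + of_int j))*(X n k) + (R n + of_int j)
     + 10*(R n + of_int j)^2 + 6*(Q n + of_int A + of_int j)*(R n + of_int j) + 6*(P n + of_int A)*(R n + of_int j)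
     + 4*(P n + of_int A)*(Q n + of_int A + of_int j))/2)"
  unfolding Hc_def Fam_def Ldefs by (simp add: algebra_simps)

lemma TB2: "Hb (X n k) (P n + of_int A) (Q n + of_int A + of_int j) (R n + of_int j + 1) =
  Fam 0 (2*A) (2*A+2*j) (2*A+2*j+2) (2*A+4*j+3) (2*j+2) 0 (-2*j-1) n k *
  ((R n + of_int j + 1) * (2*(P n + of_int A) + 2*(R n + of_int j + 1) + X n k - 1))"
  unfolding Hb_def Fam_def Ldefs by (simp add: algebra_simps)

lemma TB3: "Hb (X n k) (P n + of_int A) (Q n + of_int A + of_int C + of_int j) (R n + of_int C) =
  Fam 0 (2*A) (2*A+2*C+2*j) (2*A+2*C) (2*A+4*C+2*j+1) (2*C) (-j-1) (-2*C-j) n k *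
  ((R n + of_int C) * (2*(P n + of_int A) + 2*(R n + of_int C) + X n k - 1))"
  unfolding Hb_def Fam_def Ldefs by (simp add: algebra_simps)

end


context wz begin

definition g1 :: "int \<Rightarrow> int \<Rightarrow> complex" where
  "g1 n k = ssum A (\<lambda>j. Ha (X n k) (P n + of_int j) (Q n + of_int j) (R n) +
                        Hb (X n k) (P n + of_int j + 1) (Q n + of_int j) (R n))"
definition g2 :: "int \<Rightarrow> int \<Rightarrow> complex" where
  "g2 n k = ssum C (\<lambda>j. Hc (X n k) (P n + of_int A) (Q n + of_int A + of_int j) (R n + of_int j) +
                        Hb (X n k) (P n + of_int A) (Q n + of_int A + of_int j) (R n + of_int j + 1))"
definition g3 :: "int \<Rightarrow> int \<Rightarrow> complex" where
  "g3 n k = ssum (B - A - C) (\<lambda>j. Hb (X n k) (P n + of_int A) (Q n + of_int A + of_int C + of_int j) (R n + of_int C))"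
definition g4 :: "int \<Rightarrow> int \<Rightarrow> complex" where
  "g4 n k = ssum K (\<lambda>j. F0 (X n k + of_int j) (P n + of_int A) (Q n + of_int B) (R n + of_int C))"
definition Gt :: "int \<Rightarrow> int \<Rightarrow> complex" where
  "Gt n k = g1 n k + g2 n k + g3 n k + g4 n k"

lemma W_g1: "W g1 FF"
proof -
  have "W (\<lambda>n k. ssum A (\<lambda>j. Ha (X n k) (P n + of_int j) (Q n + of_int j) (R n) +
                        Hb (X n k) (P n + of_int j + 1) (Q n + of_int j) (R n))) FF"
  proof (intro W_ssum W_add)
    fix j
    show "W (\<lambda>n k. Ha (X n k) (P n + of_int j) (Q n + of_int j) (R n)) FF"
    proof -
      have "W (\<lambda>n k. Fam 0 (2*j) (2*j) (2*j+1) (2*j) 0 0 1 n k * (R n * (1 - 2*(Q n + of_int j) - 2*R n - X n k))) FF"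
        by (intro W_polymult W_Fam pfI) auto
      then show ?thesis by (rule W_eq) (simp_all add: TA)
    qed
    show "W (\<lambda>n k. Hb (X n k) (P n + of_int j + 1) (Q n + of_int j) (R n)) FF"
    proof -
      have "W (\<lambda>n k. Fam 0 (2*j+2) (2*j) (2*j+2) (2*j+1) 0 0 1 n k * (R n * (2*(P n + of_int j + 1) + 2*R n + X n k - 1))) FF"
        by (intro W_polymult W_Fam pfI) auto
      then show ?thesis by (rule W_eq) (simp_all add: TB1)
    qed
  qed
  then show ?thesis by (simp add: g1_def[abs_def])
qed

lemma W_g2: "W g2 FF"
proof -
  have "W (\<lambda>n k. ssum C (\<lambda>j. Hc (X n k) (P n + of_int A) (Q n + of_int A + of_int j) (R n + of_int j) +
                        Hb (X n k) (P n + of_int A) (Q n + of_int A + of_int j) (R n + of_int j + 1))) FF"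
  proof (intro W_ssum W_add)
    fix j assume C: "C \<noteq> 0"
    show "W (\<lambda>n k. Hc (X n k) (P n + of_int A) (Q n + of_int A + of_int j) (R n + of_int j)) FF"
    proof -
      have "W (\<lambda>n k. Fam 0 (2*A) (2*A+2*j) (2*A+2*j+1) (2*A+4*j+1) (2*j) 0 (-2*j) n k *
   (((X n k)^2 + (2*(P n + of_int A)+2*(Q n + of_int A + of_int j)+6*(R n + of_int j))*(X n k) + (R n + of_int j)
     + 10*(R n + of_int j)^2 + 6*(Q n + of_int A + of_int j)*(R n + of_int j) + 6*(P n + of_int A)*(R n + of_int j)
     + 4*(P n + of_int A)*(Q n + of_int A + of_int j))/2)) FF"
        using C by (intro W_polymult W_Fam pfI) auto
      then show ?thesis by (rule W_eq) (simp_all add: TC)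
    qed
    show "W (\<lambda>n k. Hb (X n k) (P n + of_int A) (Q n + of_int A + of_int j) (R n + of_int j + 1)) FF"
    proof -
      have "W (\<lambda>n k. Fam 0 (2*A) (2*A+2*j) (2*A+2*j+2) (2*A+4*j+3) (2*j+2) 0 (-2*j-1) n k *
  ((R n + of_int j + 1) * (2*(P n + of_int A) + 2*(R n + of_int j + 1) + X n k - 1))) FF"
        using C by (intro W_polymult W_Fam pfI) auto
      then show ?thesis by (rule W_eq) (simp_all add: TB2)
    qed
  qed
  then show ?thesis by (simp add: g2_def[abs_def])
qed

lemma W_g3: "W g3 FF"
proof -
  have "W (\<lambda>n k. ssum (B - A - C) (\<lambda>j. Hb (X n k) (P n + of_int A) (Q n + of_int A + of_int C + of_int j) (R n + of_int C))) FF"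
  proof (intro W_ssum)
    fix j assume D: "B - A - C \<noteq> 0"
    show "W (\<lambda>n k. Hb (X n k) (P n + of_int A) (Q n + of_int A + of_int C + of_int j) (R n + of_int C)) FF"
    proof -
      have "W (\<lambda>n k. Fam 0 (2*A) (2*A+2*C+2*j) (2*A+2*C) (2*A+4*C+2*j+1) (2*C) (-j-1) (-2*C-j) n k *
  ((R n + of_int C) * (2*(P n + of_int A) + 2*(R n + of_int C) + X n k - 1))) FF"
        using D by (intro W_polymult W_Fam pfI) auto
      then show ?thesis by (rule W_eq) (simp_all add: TB3)
    qed
  qed
  then show ?thesis by (simp add: g3_def[abs_def])
qed

end


context wz begin

lemma W_g4: "W g4 FF"
proof -
  have "W (\<lambda>n k. ssum K (\<lambda>j. F0 (X n k + of_int j) (P n + of_int A) (Q n + of_int B) (R n + of_int C))) FF"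
  proof (intro W_ssum)
    fix j
    have "W (Fam j (2*A+j) (2*B+j) (2*A+2*C+j) (2*B+2*C+j) (2*C) (A-B+C) (A-B-C)) FF"
      by (intro W_Fam) auto
    then show "W (\<lambda>n k. F0 (X n k + of_int j) (P n + of_int A) (Q n + of_int B) (R n + of_int C)) FF"
      by (rule W_eq) (simp_all add: TF)
  qed
  then show ?thesis by (simp add: g4_def[abs_def])
qed

lemma W_Gt: "W Gt FF"
proof -
  have "W (\<lambda>n k. g1 n k + g2 n k + g3 n k + g4 n k) FF"
    by (intro W_add W_g1 W_g2 W_g3 W_g4)
  then show ?thesis by (simp add: Gt_def[abs_def])
qed

lemma FF0: "FF n k = F0 (X n k) (P n) (Q n) (R n)"
  unfolding F_spec_def Ldefs by simp

lemma FFn: "FF (n+1) k = F0 (X n k + of_int K) (P n + of_int A) (Q n + of_int B) (R n + of_int C)"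
  unfolding F_spec_def Ldefs by (simp add: algebra_simps)

lemma FFk: "FF n (k+1) = Fam 1 1 1 1 1 0 0 0 n k"
  unfolding F_spec_def F0_prod Fam_def Ldefs by (simp add: algebra_simps)

lemma W_FFn: "W (\<lambda>n k. FF (n+1) k) FF"
proof -
  have "W (Fam K (2*A+K) (2*B+K) (2*A+2*C+K) (2*B+2*C+K) (2*C) (A-B+C) (A-B-C)) FF"
    by (intro W_Fam) auto
  then show ?thesis by (rule W_eq) (simp_all add: FFn TF)
qed

lemma W_FFk: "W (\<lambda>n k. FF n (k+1)) FF"
proof -
  have "W (Fam 1 1 1 1 1 0 0 0) FF" by (intro W_Fam) auto
  then show ?thesis by (rule W_eq) (simp_all add: FFk)
qed

lemma W_Gtn: "W (\<lambda>n k. Gt (n+1) k) FF"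
proof -
  have "W (\<lambda>n k. Gt (n+1) (k+0)) (\<lambda>n k. FF (n+1) (k+0))" by (rule W_shift[OF W_Gt])
  then have "W (\<lambda>n k. Gt (n+1) k) (\<lambda>n k. FF (n+1) k)" by simp
  then show ?thesis using W_FFn by (rule W_trans)
qed

lemma W_Gtk: "W (\<lambda>n k. Gt n (k+1)) FF"
proof -
  have "W (\<lambda>n k. Gt (n+0) (k+1)) (\<lambda>n k. FF (n+0) (k+1))" by (rule W_shift[OF W_Gt])
  then have "W (\<lambda>n k. Gt n (k+1)) (\<lambda>n k. FF n (k+1))" by simp
  then show ?thesis using W_FFk by (rule W_trans)
qed

lemma hyp_Gt: "hypergeometric2 Gt"
  by (rule hyp_from_W[OF W_Gt W_Gtn W_Gtk])

lemma via1: "w = L1 n k + of_int m \<Longrightarrow> w \<notin> \<int>\<^sub>\<le>\<^sub>0" using r1 by simp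
lemma via2: "w = L2 n k + of_int m \<Longrightarrow> w \<notin> \<int>\<^sub>\<le>\<^sub>0" using r2 by simp
lemma via5: "C \<noteq> 0 \<Longrightarrow> w = L5 n k + of_int m \<Longrightarrow> w \<notin> \<int>\<^sub>\<le>\<^sub>0" using r5 by simp
lemma via6: "m = 0 \<or> A - B + C \<noteq> 0 \<Longrightarrow> w = L6 n k + of_int m \<Longrightarrow> w \<notin> \<int>\<^sub>\<le>\<^sub>0" using r6 by simp

lemma D1: "g1 n (k+1) - g1 n k = F0 (X n k) (P n + of_int A) (Q n + of_int A) (R n) - F0 (X n k) (P n) (Q n) (R n)"
proof -
  have "g1 n (k+1) - g1 n k = ssum A (\<lambda>j.
      (Ha (X n k + 1) (P n + of_int j) (Q n + of_int j) (R n) + Hb (X n k + 1) (P n + of_int j + 1) (Q n + of_int j) (R n)) -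
      (Ha (X n k) (P n + of_int j) (Q n + of_int j) (R n) + Hb (X n k) (P n + of_int j + 1) (Q n + of_int j) (R n)))"
    unfolding g1_def Xs by (simp add: ssum_diff)
  also have "\<dots> = F0 (X n k) (P n + of_int A) (Q n + of_int A) (R n) - F0 (X n k) (P n + of_int 0) (Q n + of_int 0) (R n)"
  proof (rule ssum_tele[where f = "\<lambda>j. F0 (X n k) (P n + of_int j) (Q n + of_int j) (R n)"], intro allI)
    fix j
    have sa: "F0 (X n k) (P n + of_int j + 1) (Q n + of_int j) (R n) - F0 (X n k) (P n + of_int j) (Q n + of_int j) (R n)
        = Ha (X n k + 1) (P n + of_int j) (Q n + of_int j) (R n) - Ha (X n k) (P n + of_int j) (Q n + of_int j) (R n)"
      by (rule step_a; rule via1[where m="2*j"] via2[where m="2*j"] via6[where m=0];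
          simp add: Ldefs algebra_simps)
    have sb: "F0 (X n k) (P n + of_int j + 1) (Q n + of_int j + 1) (R n) - F0 (X n k) (P n + of_int j + 1) (Q n + of_int j) (R n)
        = Hb (X n k + 1) (P n + of_int j + 1) (Q n + of_int j) (R n) - Hb (X n k) (P n + of_int j + 1) (Q n + of_int j) (R n)"
      by (rule step_b; rule via1[where m="2*j+2"] via2[where m="2*j"] via6[where m=0];
          simp add: Ldefs algebra_simps)
    have e: "P n + of_int (j+1) = P n + of_int j + 1" "Q n + of_int (j+1) = Q n + of_int j + 1" by simp_all
    show "(Ha (X n k + 1) (P n + of_int j) (Q n + of_int j) (R n) + Hb (X n k + 1) (P n + of_int j + 1) (Q n + of_int j) (R n)) -
      (Ha (X n k) (P n + of_int j) (Q n + of_int j) (R n) + Hb (X n k) (P n + of_int j + 1) (Q n + of_int j) (R n)) =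
      F0 (X n k) (P n + of_int (j+1)) (Q n + of_int (j+1)) (R n) - F0 (X n k) (P n + of_int j) (Q n + of_int j) (R n)"
      unfolding e using sa sb by (simp add: algebra_simps)
  qed
  finally show ?thesis by simp
qed

end


context wz begin

lemma D2: "g2 n (k+1) - g2 n k = F0 (X n k) (P n + of_int A) (Q n + of_int A + of_int C) (R n + of_int C) - F0 (X n k) (P n + of_int A) (Q n + of_int A) (R n)"
proof -
  have "g2 n (k+1) - g2 n k = ssum C (\<lambda>j.
      (Hc (X n k + 1) (P n + of_int A) (Q n + of_int A + of_int j) (R n + of_int j) + Hb (X n k + 1) (P n + of_int A) (Q n + of_int A + of_int j) (R n + of_int j + 1)) -
      (Hc (X n k) (P n + of_int A) (Q n + of_int A + of_int j) (R n + of_int j) + Hb (X n k) (P n + of_int A) (Q n + of_int A + of_int j) (R n + of_int j + 1)))"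
    unfolding g2_def Xs by (simp add: ssum_diff)
  also have "\<dots> = F0 (X n k) (P n + of_int A) (Q n + of_int A + of_int C) (R n + of_int C) - F0 (X n k) (P n + of_int A) (Q n + of_int A + of_int 0) (R n + of_int 0)"
  proof (rule ssum_tele[where f = "\<lambda>j. F0 (X n k) (P n + of_int A) (Q n + of_int A + of_int j) (R n + of_int j)"])
    assume C: "C \<noteq> 0"
    show "\<forall>j. (Hc (X n k + 1) (P n + of_int A) (Q n + of_int A + of_int j) (R n + of_int j) + Hb (X n k + 1) (P n + of_int A) (Q n + of_int A + of_int j) (R n + of_int j + 1)) -
      (Hc (X n k) (P n + of_int A) (Q n + of_int A + of_int j) (R n + of_int j) + Hb (X n k) (P n + of_int A) (Q n + of_int A + of_int j) (R n + of_int j + 1)) =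
      F0 (X n k) (P n + of_int A) (Q n + of_int A + of_int (j+1)) (R n + of_int (j+1)) - F0 (X n k) (P n + of_int A) (Q n + of_int A + of_int j) (R n + of_int j)"
    proof (intro allI)
      fix j
      have sc: "F0 (X n k) (P n + of_int A) (Q n + of_int A + of_int j) (R n + of_int j + 1) - F0 (X n k) (P n + of_int A) (Q n + of_int A + of_int j) (R n + of_int j)
          = Hc (X n k + 1) (P n + of_int A) (Q n + of_int A + of_int j) (R n + of_int j) - Hc (X n k) (P n + of_int A) (Q n + of_int A + of_int j) (R n + of_int j)"
        by (rule step_c; rule via1[where m="2*A"] via2[where m="2*A+2*j"] via5[where m="2*j"] via6[where m=0];
            simp add: C Ldefs algebra_simps)
      have sb: "F0 (X n k) (P n + of_int A) (Q n + of_int A + of_int j + 1) (R n + of_int j + 1) - F0 (X n k) (P n + of_int A) (Q n + of_int A + of_int j) (R n + of_int j + 1)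
          = Hb (X n k + 1) (P n + of_int A) (Q n + of_int A + of_int j) (R n + of_int j + 1) - Hb (X n k) (P n + of_int A) (Q n + of_int A + of_int j) (R n + of_int j + 1)"
        by (rule step_b; rule via1[where m="2*A"] via2[where m="2*A+2*j"] via6[where m=0];
            simp add: Ldefs algebra_simps)
      have e: "Q n + of_int A + of_int (j+1) = Q n + of_int A + of_int j + 1" "R n + of_int (j+1) = R n + of_int j + 1" by simp_all
      show "(Hc (X n k + 1) (P n + of_int A) (Q n + of_int A + of_int j) (R n + of_int j) + Hb (X n k + 1) (P n + of_int A) (Q n + of_int A + of_int j) (R n + of_int j + 1)) -
      (Hc (X n k) (P n + of_int A) (Q n + of_int A + of_int j) (R n + of_int j) + Hb (X n k) (P n + of_int A) (Q n + of_int A + of_int j) (R n + of_int j + 1)) =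
      F0 (X n k) (P n + of_int A) (Q n + of_int A + of_int (j+1)) (R n + of_int (j+1)) - F0 (X n k) (P n + of_int A) (Q n + of_int A + of_int j) (R n + of_int j)"
        unfolding e using sc sb by (simp add: algebra_simps)
    qed
  qed
  finally show ?thesis by simp
qed

lemma D3: "g3 n (k+1) - g3 n k = F0 (X n k) (P n + of_int A) (Q n + of_int B) (R n + of_int C) - F0 (X n k) (P n + of_int A) (Q n + of_int A + of_int C) (R n + of_int C)"
proof -
  have "g3 n (k+1) - g3 n k = ssum (B - A - C) (\<lambda>j.
      Hb (X n k + 1) (P n + of_int A) (Q n + of_int A + of_int C + of_int j) (R n + of_int C) -
      Hb (X n k) (P n + of_int A) (Q n + of_int A + of_int C + of_int j) (R n + of_int C))"
    unfolding g3_def Xs by (simp add: ssum_diff)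
  also have "\<dots> = F0 (X n k) (P n + of_int A) (Q n + of_int A + of_int C + of_int (B - A - C)) (R n + of_int C) - F0 (X n k) (P n + of_int A) (Q n + of_int A + of_int C + of_int 0) (R n + of_int C)"
  proof (rule ssum_tele[where f = "\<lambda>j. F0 (X n k) (P n + of_int A) (Q n + of_int A + of_int C + of_int j) (R n + of_int C)"])
    assume D: "B - A - C \<noteq> 0"
    show "\<forall>j. Hb (X n k + 1) (P n + of_int A) (Q n + of_int A + of_int C + of_int j) (R n + of_int C) -
      Hb (X n k) (P n + of_int A) (Q n + of_int A + of_int C + of_int j) (R n + of_int C) =
      F0 (X n k) (P n + of_int A) (Q n + of_int A + of_int C + of_int (j+1)) (R n + of_int C) - F0 (X n k) (P n + of_int A) (Q n + of_int A + of_int C + of_int j) (R n + of_int C)"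
    proof (intro allI)
      fix j
      have sb: "F0 (X n k) (P n + of_int A) (Q n + of_int A + of_int C + of_int j + 1) (R n + of_int C) - F0 (X n k) (P n + of_int A) (Q n + of_int A + of_int C + of_int j) (R n + of_int C)
          = Hb (X n k + 1) (P n + of_int A) (Q n + of_int A + of_int C + of_int j) (R n + of_int C) - Hb (X n k) (P n + of_int A) (Q n + of_int A + of_int C + of_int j) (R n + of_int C)"
        by (rule step_b; rule via1[where m="2*A"] via2[where m="2*A+2*C+2*j"] via6[where m="-j-1"];
            use D in \<open>simp add: Ldefs algebra_simps\<close>)
      have e: "Q n + of_int A + of_int C + of_int (j+1) = Q n + of_int A + of_int C + of_int j + 1" by simp
      show "Hb (X n k + 1) (P n + of_int A) (Q n + of_int A + of_int C + of_int j) (R n + of_int C) -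
      Hb (X n k) (P n + of_int A) (Q n + of_int A + of_int C + of_int j) (R n + of_int C) =
      F0 (X n k) (P n + of_int A) (Q n + of_int A + of_int C + of_int (j+1)) (R n + of_int C) - F0 (X n k) (P n + of_int A) (Q n + of_int A + of_int C + of_int j) (R n + of_int C)"
        unfolding e using sb by simp
    qed
  qed
  also have "Q n + of_int A + of_int C + of_int (B - A - C) = Q n + of_int B" by simp
  finally show ?thesis by simp
qed

lemma D4: "g4 n (k+1) - g4 n k = F0 (X n k + of_int K) (P n + of_int A) (Q n + of_int B) (R n + of_int C) - F0 (X n k) (P n + of_int A) (Q n + of_int B) (R n + of_int C)"
proof -
  have "g4 n (k+1) - g4 n k = ssum K (\<lambda>j.
      F0 (X n k + 1 + of_int j) (P n + of_int A) (Q n + of_int B) (R n + of_int C) -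
      F0 (X n k + of_int j) (P n + of_int A) (Q n + of_int B) (R n + of_int C))"
    unfolding g4_def Xs by (simp add: ssum_diff)
  also have "\<dots> = F0 (X n k + of_int K) (P n + of_int A) (Q n + of_int B) (R n + of_int C) - F0 (X n k + of_int 0) (P n + of_int A) (Q n + of_int B) (R n + of_int C)"
    by (rule ssum_tele[where f = "\<lambda>j. F0 (X n k + of_int j) (P n + of_int A) (Q n + of_int B) (R n + of_int C)"])
       (simp add: add_ac)
  finally show ?thesis by simp
qed

lemma Delta: "FF (n+1) k - FF n k = Gt n (k+1) - Gt n k"
proof -
  have "Gt n (k+1) - Gt n k = (g1 n (k+1) - g1 n k) + (g2 n (k+1) - g2 n k) + (g3 n (k+1) - g3 n k) + (g4 n (k+1) - g4 n k)"
    by (simp add: Gt_def algebra_simps)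
  also have "\<dots> = FF (n+1) k - FF n k"
    unfolding D1 D2 D3 D4 FFn unfolding FF0 by simp
  finally show ?thesis by simp
qed

lemma mate: "WZ_mate FF Gt"
  unfolding WZ_mate_def using hyp_Gt Delta by blast

end

theorem theorem1:
  fixes K A B C :: int and k0 a b c :: complex
  assumes "F_regular K A B C k0 a b c"
  shows "\<exists>G. WZ_mate (F_spec K A B C k0 a b c) G"
proof -
  interpret wz K A B C k0 a b c using assms by unfold_locales
  show ?thesis using mate by blast
qed


end
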